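(* The statement $\tilde S(1)$ holds.
   Context: Parallelograms in $\mathbb{R}$ are compact intervals $\{b+x:|x|\le l\}$, $l>0$, with width $l$; $CR$ is the dilation of $R$ by factor $C$ about its centre. A finite family $\mathcal R$ is $B$-overlapping ($B:[1,\infty)\to[1,\infty)$ increasing) if $\sum_{R\in\mathcal R}1_{\mu R}\le B(\mu)$ for all $\mu\ge1$; a family depending on $\delta$ is boundedly overlapping if this holds with $B$ independent of $\delta$. Decoupling: for $S\subseteq\mathbb{R}^m$, a finite family $\mathcal R$ of parallelograms and $p,q\in[2,\infty]$, $\mathrm{Dec}(S,\mathcal R,p,q)$ is the smallest constant with $\|\sum_R f_R\|_{L^p(\mathbb{R}^m)}\le \mathrm{Dec}\,(\#\mathcal R)^{\frac12-\frac1q}\big\|\|f_R\|_{L^p}\big\|_{\ell^q(R\in\mathcal R)}$ for all smooth $f_R$ Fourier supported in $R\cap S$. $S$ can be $\ell^q(L^p)$ decoupled into $\mathcal R$ at cost $K$ if $S\subseteq\bigcup\mathcal R$ and $\mathrm{Dec}\le K$. $\mathcal P_{n,d}$: real polynomials in $n$ variables of degree at most $d$ with $\max_{[-1,1]^n}|\phi|\le1$. $\tilde S(n)$ means: for every $d\ge1$ there is $c_{n,d}>0$ such that for every $\phi\in\mathcal P_{n,d}$, every $0<\delta<c_{n,d}$, every $\varepsilon\in(0,1]$ and every parallelogram $R\subseteq[-1,1]^n$ of width at least $\delta$, there is a covering $\mathcal S_\delta$ of $\{x\in R:|\phi(x)|\le\delta\}$ by parallelograms contained in $2R$ such that (1)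 each member has width at least $\delta$ and $\mathcal S_\delta$ is boundedly overlapping; (2) $|\phi(x)|\le C\delta$ for every $x$ in every member; (3) for every $2\le p\le\frac{2(n+1)}{n-1}$ (for $n=1$: every $p\in[2,\infty]$), $\{x\in R:|\phi(x)|\le\delta\}$ can be $\ell^p(L^p)$ decoupled into $\mathcal S_\delta$ at cost at most $C\delta^{-\varepsilon}$. Here $C$ and the overlap function depend only on $n,d,\varepsilon,p$. *)

theory Defs
  imports "HOL-Probability.Probability" "HOL-Computational_Algebra.Polynomial"
begin

text \<open>Parallelograms in the real line: a pair (b, l) with l > 0 stands for the
 compact interval with centre b and width l.\<close>

definition par :: "real \<times> real \<Rightarrow> real set" where
  "par R = {x. \<bar>x - fst R\<bar> \<le> snd R}"

definition width :: "real \<times> real \<Rightarrow> real" where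
  "width R = snd R"

definition is_par :: "real \<times> real \<Rightarrow> bool" where
  "is_par R \<longleftrightarrow> snd R > 0"

definition dil :: "real \<Rightarrow> real \<times> real \<Rightarrow> real \<times> real" where
  "dil C R = (fst R, C * snd R)"

definition overlap_fun :: "(real \<Rightarrow> real) \<Rightarrow> bool" where
  "overlap_fun B \<longleftrightarrow> mono_on {1..} B \<and> (\<forall>\<mu>\<ge>1. B \<mu> \<ge> 1)"

definition B_overlapping :: "(real \<Rightarrow> real) \<Rightarrow> (real \<times> real) set \<Rightarrow> bool" where
  "B_overlapping B Rs \<longleftrightarrow>
     (\<forall>\<mu>\<ge>1. \<forall>x. (\<Sum>R\<in>Rs. indicator (par (dil \<mu> R)) x) \<le> B \<mu>)"

definition fourier :: "(real \<Rightarrow> complex) \<Rightarrow> real \<Rightarrow> complex" where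
  "fourier f \<xi> = integral\<^sup>L lborel (\<lambda>x. f x * cis (- 2 * pi * x * \<xi>))"

definition vd :: "(real \<Rightarrow> complex) \<Rightarrow> real \<Rightarrow> complex" where
  "vd g = (\<lambda>x. vector_derivative g (at x))"

definition smooth :: "(real \<Rightarrow> complex) \<Rightarrow> bool" where
  "smooth f \<longleftrightarrow> (\<forall>k x. ((vd ^^ k) f) differentiable (at x))"

definition memLp :: "ennreal \<Rightarrow> (real \<Rightarrow> complex) \<Rightarrow> bool" where
  "memLp p f \<longleftrightarrow> f \<in> borel_measurable lborel \<and>
     (if p = \<infinity> then esssup lborel (\<lambda>x. ereal (norm (f x))) < \<infinity>
      else integrable lborel (\<lambda>x. norm (f x) powr enn2real p))"

definition Lpnorm :: "ennreal \<Rightarrow> (real \<Rightarrow> complex) \<Rightarrow> real" where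
  "Lpnorm p f = (if p = \<infinity> then real_of_ereal (esssup lborel (\<lambda>x. ereal (norm (f x))))
     else (integral\<^sup>L lborel (\<lambda>x. norm (f x) powr enn2real p)) powr (1 / enn2real p))"

definition lqnorm :: "ennreal \<Rightarrow> ('i \<Rightarrow> real) \<Rightarrow> 'i set \<Rightarrow> real" where
  "lqnorm q a I = (if q = \<infinity> then (if I = {} then 0 else Max (a ` I))
     else (\<Sum>i\<in>I. a i powr enn2real q) powr (1 / enn2real q))"

definition inv_exp :: "ennreal \<Rightarrow> real" where
  "inv_exp q = (if q = \<infinity> then 0 else 1 / enn2real q)"

text \<open>Admissible test functions: smooth, integrable (so the Fourier transform is
 defined pointwise), in L^p, with Fourier support inside A.\<close>
definition fourier_supp_in :: "ennreal \<Rightarrow> (real \<Rightarrow> complex) \<Rightarrow> real set \<Rightarrow> bool" where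
  "fourier_supp_in p f A \<longleftrightarrow> smooth f \<and> integrable lborel f \<and> memLp p f \<and>
     closure {\<xi>. fourier f \<xi> \<noteq> 0} \<subseteq> A"

text \<open>S can be l^q(L^p) decoupled into the finite family Rs at cost K, i.e.
 S is covered by Rs and Dec(S, Rs, p, q) <= K.\<close>
definition decouples :: "real set \<Rightarrow> (real \<times> real) set \<Rightarrow> ennreal \<Rightarrow> ennreal \<Rightarrow> real \<Rightarrow> bool" where
  "decouples S Rs p q K \<longleftrightarrow> finite Rs \<and> S \<subseteq> (\<Union>R\<in>Rs. par R) \<and>
     (\<forall>f. (\<forall>R\<in>Rs. fourier_supp_in p (f R) (par R \<inter> S)) \<longrightarrow>
        Lpnorm p (\<lambda>x. \<Sum>R\<in>Rs. f R x)
          \<le> K * real (card Rs) powr (1/2 - inv_exp q) * lqnorm q (\<lambda>R. Lpnorm p (f R)) Rs)"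

definition P1 :: "nat \<Rightarrow> real poly set" where
  "P1 d = {\<phi>. degree \<phi> \<le> d \<and> (\<forall>x\<in>{-1..1}. \<bar>poly \<phi> x\<bar> \<le> 1)}"

end

theory Submission
  imports Defs
begin


lemma pw_bound:
  fixes S :: "'i set" and a :: "'i \<Rightarrow> complex" and r :: real
  assumes fin: "finite S" and r: "r > 0"
  shows "norm (\<Sum>R\<in>S. a R) powr r \<le> real (card S) powr r * (\<Sum>R\<in>S. norm (a R) powr r)"
proof -
  define T where "T = (\<Sum>R\<in>S. norm (a R) powr r)"
  have T0: "T \<ge> 0" unfolding T_def by (intro sum_nonneg) auto
  have each: "norm (a R) \<le> T powr (1/r)" if "R \<in> S" for R
  proof -
    have "norm (a R) powr r \<le> T" unfolding T_def
      using that fin by (intro member_le_sum) auto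
    hence "(norm (a R) powr r) powr (1/r) \<le> T powr (1/r)"
      by (intro powr_mono2) (use r in \<open>auto elim!: eventually_mono\<close>)
    thus ?thesis using r by (simp add: powr_powr)
  qed
  have "norm (\<Sum>R\<in>S. a R) \<le> (\<Sum>R\<in>S. norm (a R))" by (rule norm_sum)
  also have "\<dots> \<le> (\<Sum>R\<in>S. T powr (1/r))" by (intro sum_mono each)
  also have "\<dots> = real (card S) * T powr (1/r)" by simp
  finally have h: "norm (\<Sum>R\<in>S. a R) \<le> real (card S) * T powr (1/r)" .
  have "norm (\<Sum>R\<in>S. a R) powr r \<le> (real (card S) * T powr (1/r)) powr r"
    by (intro powr_mono2 h) (use r in \<open>auto elim!: eventually_mono\<close>)
  also have "\<dots> = real (card S) powr r * T"
    using r T0 by (simp add: powr_mult powr_powr)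
  finally show ?thesis unfolding T_def .
qed

lemma triv_dec:
  fixes S :: "(real \<times> real) set" and f :: "real \<times> real \<Rightarrow> real \<Rightarrow> complex" and p :: ennreal
  assumes fin: "finite S" and p: "p \<ge> 2" and mem: "\<forall>R\<in>S. memLp p (f R)"
  shows "Lpnorm p (\<lambda>x. \<Sum>R\<in>S. f R x) \<le> real (card S) * lqnorm p (\<lambda>R. Lpnorm p (f R)) S
     \<and> 0 \<le> lqnorm p (\<lambda>R. Lpnorm p (f R)) S"
proof (cases "p = \<infinity>")
  case True
  define e where "e R = esssup lborel (\<lambda>x. ereal (norm (f R x)))" for R
  have meas: "f R \<in> borel_measurable lborel" if "R \<in> S" for R
    using mem that unfolding memLp_def by auto
  have efin: "e R < \<infinity>" if "R \<in> S" for R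
    using mem that True unfolding memLp_def e_def by auto
  have e0: "0 \<le> e R" for R
  proof -
    have "esssup lborel (\<lambda>x::real. ereal 0) \<le> e R" unfolding e_def
      by (rule esssup_mono) auto
    thus ?thesis by (simp add: esssup_const zero_ereal_def)
  qed
  define a where "a R = real_of_ereal (e R)" for R
  have ea: "e R = ereal (a R)" if "R \<in> S" for R
    using efin[OF that] e0[of R] unfolding a_def by (cases "e R") auto
  have a0: "0 \<le> a R" for R unfolding a_def using e0[of R] by (cases "e R") auto
  have ae: "AE x in lborel. norm (f R x) \<le> a R" if "R \<in> S" for R
    using esssup_AE[of "\<lambda>x. ereal (norm (f R x))" lborel] ea[OF that] unfolding e_def
    by auto
  have aeall: "AE x in lborel. \<forall>R\<in>S. norm (f R x) \<le> a R"
    using ae fin by (simp add: AE_finite_all)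
  define L where "L = lqnorm p (\<lambda>R. Lpnorm p (f R)) S"
  have Lp_eq: "Lpnorm p (f R) = a R" if "R \<in> S" for R
    using True unfolding Lpnorm_def a_def e_def by simp
  have L0: "0 \<le> L"
  proof (cases "S = {}")
    case True thus ?thesis using \<open>p = \<infinity>\<close> unfolding L_def lqnorm_def by simp
  next
    case False
    then obtain R where "R \<in> S" by auto
    hence "Lpnorm p (f R) \<le> L" using fin \<open>p = \<infinity>\<close> unfolding L_def lqnorm_def
      by (auto intro!: Max_ge)
    thus ?thesis using Lp_eq[OF \<open>R \<in> S\<close>] a0[of R] by simp
  qed
  have aL: "a R \<le> L" if "R \<in> S" for R
  proof -
    have "Lpnorm p (f R) \<le> L" using that fin \<open>p = \<infinity>\<close> unfolding L_def lqnorm_def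
      by (auto intro!: Max_ge)
    thus ?thesis using Lp_eq[OF that] by simp
  qed
  have AEb: "AE x in lborel. norm (\<Sum>R\<in>S. f R x) \<le> real (card S) * L"
    using aeall
  proof eventually_elim
    case (elim x)
    have "norm (\<Sum>R\<in>S. f R x) \<le> (\<Sum>R\<in>S. norm (f R x))" by (rule norm_sum)
    also have "\<dots> \<le> (\<Sum>R\<in>S. L)" using elim aL by (intro sum_mono) (auto intro: order_trans)
    finally show ?case by simp
  qed
  hence "esssup lborel (\<lambda>x. ereal (norm (\<Sum>R\<in>S. f R x))) \<le> ereal (real (card S) * L)"
  proof (intro esssup_I)
    have "(\<lambda>x. \<Sum>R\<in>S. f R x) \<in> borel_measurable lborel"
      using meas by (intro borel_measurable_sum) auto
    thus "(\<lambda>x. ereal (norm (\<Sum>R\<in>S. f R x))) \<in> borel_measurable lborel"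
      by measurable
    show "AE x in lborel. ereal (norm (\<Sum>R\<in>S. f R x)) \<le> ereal (real (card S) * L)"
      using AEb by (rule eventually_mono) simp
  qed
  moreover have "0 \<le> real (card S) * L" using L0 by simp
  ultimately have "real_of_ereal (esssup lborel (\<lambda>x. ereal (norm (\<Sum>R\<in>S. f R x)))) \<le> real (card S) * L"
    by (cases "esssup lborel (\<lambda>x. ereal (norm (\<Sum>R\<in>S. f R x)))") auto
  thus ?thesis using True L0 unfolding Lpnorm_def L_def by simp
next
  case False
  define r where "r = enn2real p"
  have pr: "p = ennreal r" using False unfolding r_def by (cases p) auto
  have r2: "r \<ge> 2" using p pr
    by simp
  have r0: "r > 0" using r2 by simp
  have meas: "f R \<in> borel_measurable lborel" if "R \<in> S" for R
    using mem that unfolding memLp_def by auto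
  have int: "integrable lborel (\<lambda>x. norm (f R x) powr r)" if "R \<in> S" for R
    using mem that False unfolding memLp_def r_def by auto
  define I where "I R = integral\<^sup>L lborel (\<lambda>x. norm (f R x) powr r)" for R
  have I0: "0 \<le> I R" for R unfolding I_def by (intro integral_nonneg_AE) auto
  define B where "B = (\<Sum>R\<in>S. I R)"
  have B0: "0 \<le> B" unfolding B_def using I0 by (intro sum_nonneg) auto
  have "integral\<^sup>L lborel (\<lambda>x. norm (\<Sum>R\<in>S. f R x) powr r)
      \<le> integral\<^sup>L lborel (\<lambda>x. real (card S) powr r * (\<Sum>R\<in>S. norm (f R x) powr r))"
  proof (rule integral_mono')
    show "integrable lborel (\<lambda>x. real (card S) powr r * (\<Sum>R\<in>S. norm (f R x) powr r))"
      using int by (intro integrable_mult_right integrable_sum) auto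
  qed (auto intro!: sum_nonneg pw_bound fin r0 mult_nonneg_nonneg)
  also have "\<dots> = real (card S) powr r * B"
    unfolding B_def I_def using int by (simp add: integral_sum)
  finally have A: "integral\<^sup>L lborel (\<lambda>x. norm (\<Sum>R\<in>S. f R x) powr r) \<le> real (card S) powr r * B" .
  have "Lpnorm p (\<lambda>x. \<Sum>R\<in>S. f R x) \<le> (real (card S) powr r * B) powr (1/r)"
    unfolding Lpnorm_def using False r_def A r0
    by (auto intro!: powr_mono2 integral_nonneg_AE)
  also have "\<dots> = real (card S) * B powr (1/r)"
    using r0 B0 by (simp add: powr_mult powr_powr)
  also have "B powr (1/r) = lqnorm p (\<lambda>R. Lpnorm p (f R)) S"
    unfolding lqnorm_def Lpnorm_def B_def I_def using False r_def r0 I0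
    by (simp add: powr_powr I_def[symmetric])
  finally show ?thesis using B0
    by (metis \<open>B powr (1 / r) = lqnorm p (\<lambda>R. Lpnorm p (f R)) S\<close> powr_ge_zero)
qed



lemma poly_lip_fixed:
  fixes q :: "real poly"
  shows "\<exists>L\<ge>0. \<forall>x\<in>{-1..1}. \<forall>y\<in>{-1..1}. \<bar>poly q x - poly q y\<bar> \<le> L * \<bar>x - y\<bar>"
proof -
  have "compact ((\<lambda>z. poly (pderiv q) z) ` {-1..1::real})"
    by (intro compact_continuous_image continuous_intros) auto
  then obtain K where K: "\<forall>w\<in>(\<lambda>z. poly (pderiv q) z) ` {-1..1::real}. norm w \<le> K"
    using compact_imp_bounded bounded_iff by metis
  have K0: "K \<ge> 0" using K[rule_format, of "poly (pderiv q) 0"] by auto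
  have main: "\<bar>poly q y - poly q x\<bar> \<le> K * \<bar>y - x\<bar>" if "x \<in> {-1..1}" "y \<in> {-1..1}" "x < y" for x y
  proof -
    obtain z where z: "x < z" "z < y" "poly q y - poly q x = (y - x) * poly (pderiv q) z"
      using MVT2[OF \<open>x < y\<close>, of "\<lambda>x. poly q x" "\<lambda>x. poly (pderiv q) x"] by auto
    have "z \<in> {-1..1}" using z that by auto
    hence "\<bar>poly (pderiv q) z\<bar> \<le> K" using K by auto
    thus ?thesis using z \<open>x < y\<close> by (simp add: abs_mult mult.commute mult_left_mono)
  qed
  have "\<forall>x\<in>{-1..1}. \<forall>y\<in>{-1..1}. \<bar>poly q x - poly q y\<bar> \<le> K * \<bar>x - y\<bar>"
  proof (intro ballI)
    fix x y :: real assume xy: "x \<in> {-1..1}" "y \<in> {-1..1}"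
    consider "x < y" | "x = y" | "y < x" by linarith
    thus "\<bar>poly q x - poly q y\<bar> \<le> K * \<bar>x - y\<bar>"
    proof cases
      case 1 thus ?thesis using main[OF xy(1,2)] by (simp add: abs_minus_commute)
    next
      case 2 thus ?thesis by simp
    next
      case 3 thus ?thesis using main[OF xy(2,1)] by simp
    qed
  qed
  thus ?thesis using K0 by blast
qed

lemma lagrange_repr:
  fixes d :: nat and \<phi> :: "real poly"
  assumes d: "d \<ge> 1" and deg: "degree \<phi> \<le> d"
  defines "t \<equiv> (\<lambda>j::nat. real j / real d)"
  defines "lg \<equiv> (\<lambda>j. smult (1 / (\<Prod>i\<in>{0..d}-{j}. (t j - t i))) (\<Prod>i\<in>{0..d}-{j}. [:- t i, 1:]))"
  shows "\<phi> = (\<Sum>j\<in>{0..d}. smult (poly \<phi> (t j)) (lg j))"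
proof (rule ccontr)
  assume ne: "\<phi> \<noteq> (\<Sum>j\<in>{0..d}. smult (poly \<phi> (t j)) (lg j))"
  define \<psi> where "\<psi> = \<phi> - (\<Sum>j\<in>{0..d}. smult (poly \<phi> (t j)) (lg j))"
  have psi0: "\<psi> \<noteq> 0" using ne unfolding \<psi>_def by simp
  have tinj: "inj_on t {0..d}" unfolding t_def inj_on_def using d by auto
  have degl: "degree (lg j) \<le> d" if "j \<in> {0..d}" for j
  proof -
    have "degree (\<Prod>i\<in>{0..d}-{j}. [:- t i, 1:]) \<le> (\<Sum>i\<in>{0..d}-{j}. (degree \<circ> (\<lambda>i. [:- t i, 1:])) i)"
      by (rule degree_prod_sum_le) auto
    also have "\<dots> = card ({0..d}-{j})" by simp
    also have "\<dots> \<le> d" using that by simp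
    finally show ?thesis unfolding lg_def by (meson degree_smult_le order_trans)
  qed
  have degpsi: "degree \<psi> \<le> d" unfolding \<psi>_def
    by (intro degree_diff_le deg degree_sum_le) (auto intro: order_trans[OF degree_smult_le] degl)
  have lval: "poly (lg j) (t k) = (if k = j then 1 else 0)" if "j \<in> {0..d}" "k \<in> {0..d}" for j k
  proof (cases "k = j")
    case True
    have "(\<Prod>i\<in>{0..d}-{j}. (t j - t i)) \<noteq> 0"
      using tinj that by (auto simp: inj_on_def)
    thus ?thesis using True unfolding lg_def by (simp add: poly_prod)
  next
    case False
    have "(\<Prod>i\<in>{0..d}-{j}. poly [:- t i, 1:] (t k)) = 0"
      using False that by (intro prod_zero) auto
    thus ?thesis using False unfolding lg_def by (simp add: poly_prod)
  qed
  have roots: "t ` {0..d} \<subseteq> {x. poly \<psi> x = 0}"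
  proof
    fix x assume "x \<in> t ` {0..d}"
    then obtain k where k: "k \<in> {0..d}" "x = t k" by auto
    have "(\<Sum>j\<in>{0..d}. poly \<phi> (t j) * poly (lg j) (t k)) = poly \<phi> (t k)"
    proof -
      have "(\<Sum>j\<in>{0..d}. poly \<phi> (t j) * poly (lg j) (t k)) = (\<Sum>j\<in>{0..d}. if j = k then poly \<phi> (t j) else 0)"
        using k by (intro sum.cong) (auto simp: lval)
      also have "\<dots> = poly \<phi> (t k)" using k by simp
      finally show ?thesis .
    qed
    thus "x \<in> {x. poly \<psi> x = 0}" using k unfolding \<psi>_def by (simp add: poly_sum)
  qed
  have "card (t ` {0..d}) \<le> card {x. poly \<psi> x = 0}"
    by (intro card_mono poly_roots_finite psi0 roots)
  also have "\<dots> \<le> degree \<psi>" by (rule card_poly_roots_bound[OF psi0])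
  finally have "d + 1 \<le> d" using degpsi card_image[OF tinj] by simp
  thus False by simp
qed

lemma poly_lip:
  fixes d :: nat assumes d: "d \<ge> 1"
  shows "\<exists>L\<ge>0. \<forall>\<phi>\<in>P1 d. \<forall>x\<in>{-1..1}. \<forall>y\<in>{-1..1}. \<bar>poly \<phi> x - poly \<phi> y\<bar> \<le> L * \<bar>x - y\<bar>"
proof -
  define t where "t = (\<lambda>j::nat. real j / real d)"
  define lg where "lg = (\<lambda>j. smult (1 / (\<Prod>i\<in>{0..d}-{j}. (t j - t i))) (\<Prod>i\<in>{0..d}-{j}. [:- t i, 1:]))"
  have "\<forall>j. \<exists>L\<ge>0. \<forall>x\<in>{-1..1}. \<forall>y\<in>{-1..1}. \<bar>poly (lg j) x - poly (lg j) y\<bar> \<le> L * \<bar>x - y\<bar>"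
    using poly_lip_fixed by blast
  then obtain Lj where Lj: "\<And>j. Lj j \<ge> 0"
    "\<And>j x y. x\<in>{-1..1} \<Longrightarrow> y\<in>{-1..1} \<Longrightarrow> \<bar>poly (lg j) x - poly (lg j) y\<bar> \<le> Lj j * \<bar>x - y\<bar>"
    by metis
  have tin: "t j \<in> {-1..1}" if "j \<in> {0..d}" for j
    using that d unfolding t_def by (auto simp: field_simps)
  show ?thesis
  proof (intro exI[of _ "\<Sum>j\<in>{0..d}. Lj j"] conjI ballI)
    show "0 \<le> (\<Sum>j\<in>{0..d}. Lj j)" using Lj by (intro sum_nonneg) auto
    fix \<phi> x y assume \<phi>: "\<phi> \<in> P1 d" and xy: "x \<in> {-1..1::real}" "y \<in> {-1..1::real}"
    have rep: "\<phi> = (\<Sum>j\<in>{0..d}. smult (poly \<phi> (t j)) (lg j))"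
      using lagrange_repr[OF d, of \<phi>] \<phi> unfolding P1_def t_def lg_def by auto
    have bnd: "\<bar>poly \<phi> (t j)\<bar> \<le> 1" if "j \<in> {0..d}" for j
      using \<phi> tin[OF that] unfolding P1_def by auto
    have "poly \<phi> x - poly \<phi> y = (\<Sum>j\<in>{0..d}. poly \<phi> (t j) * (poly (lg j) x - poly (lg j) y))"
      by (subst (1 2) rep) (simp add: poly_sum sum_subtractf[symmetric] algebra_simps)
    hence "\<bar>poly \<phi> x - poly \<phi> y\<bar> \<le> (\<Sum>j\<in>{0..d}. \<bar>poly \<phi> (t j) * (poly (lg j) x - poly (lg j) y)\<bar>)"
      by (simp add: sum_abs)
    also have "\<dots> \<le> (\<Sum>j\<in>{0..d}. Lj j * \<bar>x - y\<bar>)"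
    proof (intro sum_mono)
      fix j assume j: "j \<in> {0..d}"
      have "\<bar>poly \<phi> (t j) * (poly (lg j) x - poly (lg j) y)\<bar>
          = \<bar>poly \<phi> (t j)\<bar> * \<bar>poly (lg j) x - poly (lg j) y\<bar>" by (simp add: abs_mult)
      also have "\<dots> \<le> 1 * \<bar>poly (lg j) x - poly (lg j) y\<bar>"
        by (intro mult_right_mono bnd j) auto
      also have "\<dots> \<le> Lj j * \<bar>x - y\<bar>" using Lj(2)[OF xy] by simp
      finally show "\<bar>poly \<phi> (t j) * (poly (lg j) x - poly (lg j) y)\<bar> \<le> Lj j * \<bar>x - y\<bar>" .
    qed
    also have "\<dots> = (\<Sum>j\<in>{0..d}. Lj j) * \<bar>x - y\<bar>" by (simp add: sum_distrib_right)
    finally show "\<bar>poly \<phi> x - poly \<phi> y\<bar> \<le> (\<Sum>j\<in>{0..d}. Lj j) * \<bar>x - y\<bar>" .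
  qed
qed



lemma clamp_facts:
  fixes b l z z' \<delta> :: real
  assumes "b - l \<le> z" "z \<le> z'" "z' \<le> b + l" "0 < \<delta>" "\<delta> \<le> l"
  defines "h \<equiv> max ((z' - z) / 2) \<delta>"
  defines "c \<equiv> max (b - l + h) (min (b + l - h) ((z + z') / 2))"
  shows "h \<ge> \<delta>" "b - l \<le> c - h" "c + h \<le> b + l" "\<And>x. z \<le> x \<Longrightarrow> x \<le> z' \<Longrightarrow> \<bar>x - c\<bar> \<le> h"
    "\<And>x. \<bar>x - c\<bar> \<le> h \<Longrightarrow> (z \<le> x \<and> x \<le> z') \<or> \<bar>x - z\<bar> \<le> 2 * \<delta>"
proof -
  have key: "h \<ge> \<delta> \<and> b - l \<le> c - h \<and> c + h \<le> b + l \<and> \<bar>z - c\<bar> \<le> h \<and> \<bar>z' - c\<bar> \<le> h \<and>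
     (h = \<delta> \<or> (c = (z + z') / 2 \<and> h = (z' - z) / 2))"
  proof (cases "(z' - z) / 2 \<le> \<delta>")
    case True
    hence hh: "h = \<delta>" unfolding h_def by simp
    have c1: "c \<ge> b - l + \<delta>" "c \<le> b + l - \<delta>" unfolding c_def hh using assms by auto
    have c2: "(c = b - l + \<delta> \<and> (z + z') / 2 \<le> b - l + \<delta>) \<or> (c = b + l - \<delta> \<and> (z + z') / 2 \<ge> b + l - \<delta>) \<or> c = (z + z') / 2" unfolding c_def hh max_def min_def using assms(5) by auto
    show ?thesis using c1 c2 hh True assms(1-5) by (auto simp: abs_if)
  next
    case False
    hence hh: "h = (z' - z) / 2" unfolding h_def by simp
    have i1: "b + l - (z' - z) / 2 \<ge> (z + z') / 2" using assms(3) by (simp add: field_simps)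
    have i2: "b - l + (z' - z) / 2 \<le> (z + z') / 2" using assms(1) by (simp add: field_simps)
    have cc: "c = (z + z') / 2" unfolding c_def hh using i1 i2 by simp
    show ?thesis using hh cc False assms(1-5) by (auto simp: abs_if)
  qed
  show "h \<ge> \<delta>" "b - l \<le> c - h" "c + h \<le> b + l" using key by auto
  show "\<bar>x - c\<bar> \<le> h" if "z \<le> x" "x \<le> z'" for x using key that by (auto simp: abs_if)
  show "(z \<le> x \<and> x \<le> z') \<or> \<bar>x - z\<bar> \<le> 2 * \<delta>" if "\<bar>x - c\<bar> \<le> h" for x
  proof -
    from key have "h = \<delta> \<or> (c = (z + z') / 2 \<and> h = (z' - z) / 2)" by blast
    thus ?thesis
    proof
      assume "h = \<delta>" thus ?thesis using key that unfolding abs_le_iff by auto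
    next
      assume "c = (z + z') / 2 \<and> h = (z' - z) / 2" thus ?thesis using that unfolding abs_le_iff by auto
    qed
  qed
qed

lemma cover:
  fixes d :: nat and L \<delta> :: real and \<phi> :: "real poly" and R :: "real \<times> real"
  assumes d: "d \<ge> 1" and L: "L \<ge> 0"
    and lip: "\<forall>x\<in>{-1..1}. \<forall>y\<in>{-1..1}. \<bar>poly \<phi> x - poly \<phi> y\<bar> \<le> L * \<bar>x - y\<bar>"
    and deg: "degree \<phi> \<le> d" and \<delta>: "0 < \<delta>"
    and R: "is_par R" "par R \<subseteq> {-1..1}" "width R \<ge> \<delta>"
  shows "\<exists>S. finite S \<and> card S \<le> (2*d+2)^2 \<and>
     {x \<in> par R. \<bar>poly \<phi> x\<bar> \<le> \<delta>} \<subseteq> (\<Union>Q\<in>S. par Q) \<and>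
     (\<forall>Q\<in>S. is_par Q \<and> par Q \<subseteq> par (dil 2 R) \<and> width Q \<ge> \<delta>) \<and>
     (\<forall>Q\<in>S. \<forall>x\<in>par Q. \<bar>poly \<phi> x\<bar> \<le> (1 + 2 * L) * \<delta>)"
proof -
  obtain b l where Rbl: "R = (b, l)" by (cases R)
  have l: "l \<ge> \<delta>" using R Rbl unfolding width_def by simp
  have parR: "par R = {x. \<bar>x - b\<bar> \<le> l}" unfolding par_def Rbl by simp
  define E where "E = {x \<in> par R. \<bar>poly \<phi> x\<bar> \<le> \<delta>}"
  define Z where "Z = {b - l, b + l} \<union> (if degree \<phi> = 0 then {} else
      {x. poly (\<phi> - [:\<delta>:]) x = 0} \<union> {x. poly (\<phi> + [:\<delta>:]) x = 0})"
  have Zcard: "finite Z \<and> card Z \<le> 2 * d + 2"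
  proof (cases "degree \<phi> = 0")
    case True
    have "card {b - l, b + l} \<le> 2" by (simp add: card_insert_le_m1)
    thus ?thesis using True unfolding Z_def by simp
  next
    case False
    have n1: "\<phi> - [:\<delta>:] \<noteq> 0" using False by (metis degree_pCons_0 eq_iff_diff_eq_0)
    have n2: "\<phi> + [:\<delta>:] \<noteq> 0" using False
      by (metis add.inverse_unique degree_minus degree_pCons_0)
    have d1: "degree (\<phi> - [:\<delta>:]) \<le> d" by (intro degree_diff_le deg) simp
    have d2: "degree (\<phi> + [:\<delta>:]) \<le> d" by (intro degree_add_le deg) simp
    have c1: "card {x. poly (\<phi> - [:\<delta>:]) x = 0} \<le> d"
      using card_poly_roots_bound[OF n1] d1 by linarith
    have c2: "card {x. poly (\<phi> + [:\<delta>:]) x = 0} \<le> d"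
      using card_poly_roots_bound[OF n2] d2 by linarith
    have c0: "card {b - l, b + l} \<le> 2" by (simp add: card_insert_le_m1)
    have f: "finite Z" unfolding Z_def using False poly_roots_finite[OF n1] poly_roots_finite[OF n2] by simp
    have Zeq: "Z = {b - l, b + l} \<union> ({x. poly (\<phi> - [:\<delta>:]) x = 0} \<union> {x. poly (\<phi> + [:\<delta>:]) x = 0})"
      unfolding Z_def using False by simp
    have "card Z \<le> card {b - l, b + l} + (card {x. poly (\<phi> - [:\<delta>:]) x = 0} + card {x. poly (\<phi> + [:\<delta>:]) x = 0})"
      unfolding Zeq by (rule order_trans[OF card_Un_le add_left_mono[OF card_Un_le]])
    thus ?thesis using f c0 c1 c2 by linarith
  qed
  have bZ: "b - l \<in> Z" "b + l \<in> Z" unfolding Z_def by auto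
  have rootZ: "t \<in> Z" if "degree \<phi> \<noteq> 0" "\<bar>poly \<phi> t\<bar> = \<delta>" for t
    using that unfolding Z_def by (auto simp: abs_if split: if_splits)
  define P where "P = {(z, z'). z \<in> Z \<and> z' \<in> Z \<and> z \<le> z' \<and> {z..z'} \<subseteq> E}"
  define g where "g = (\<lambda>(z::real, z'::real). let h = max ((z' - z) / 2) \<delta> in
      (max (b - l + h) (min (b + l - h) ((z + z') / 2)), h))"
  define S where "S = g ` P"
  have PZ: "P \<subseteq> Z \<times> Z" unfolding P_def by auto
  have finP: "finite P" using Zcard PZ finite_subset by blast
  have cardS: "card S \<le> (2*d+2)^2"
  proof -
    have "card S \<le> card P" unfolding S_def using finP by (rule card_image_le)
    also have "\<dots> \<le> card (Z \<times> Z)" using PZ Zcard by (intro card_mono) auto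
    also have "\<dots> = card Z * card Z" by (simp add: card_cartesian_product)
    also have "\<dots> \<le> (2*d+2) * (2*d+2)" using Zcard by (intro mult_mono) auto
    finally show ?thesis by (simp add: power2_eq_square)
  qed
  have Pfacts: "is_par (g (z, z')) \<and> par (g (z, z')) \<subseteq> par (dil 2 R) \<and> width (g (z, z')) \<ge> \<delta>
      \<and> {z..z'} \<subseteq> par (g (z, z')) \<and> (\<forall>x\<in>par (g (z, z')). \<bar>poly \<phi> x\<bar> \<le> (1 + 2 * L) * \<delta>)"
    if zz: "(z, z') \<in> P" for z z'
  proof -
    have sub: "{z..z'} \<subseteq> E" and zle: "z \<le> z'" using zz unfolding P_def by auto
    have zE: "z \<in> E" "z' \<in> E" using sub zle by auto
    hence zr: "b - l \<le> z" "z' \<le> b + l" unfolding E_def parR by auto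
    note cf = clamp_facts[OF zr(1) zle zr(2) \<delta> l]
    define h where "h = max ((z' - z) / 2) \<delta>"
    define c where "c = max (b - l + h) (min (b + l - h) ((z + z') / 2))"
    have geq: "g (z, z') = (c, h)" unfolding g_def h_def c_def by (simp add: Let_def)
    have parQ: "par (g (z, z')) = {x. \<bar>x - c\<bar> \<le> h}" unfolding geq par_def by simp
    have hd: "h \<ge> \<delta>" using cf(1) unfolding h_def .
    have inR: "par (g (z, z')) \<subseteq> par R" unfolding parQ parR
      using cf(2,3) unfolding h_def[symmetric] c_def[symmetric] by auto
    have "is_par (g (z, z'))" using hd \<delta> unfolding geq is_par_def by simp
    moreover have "par (g (z, z')) \<subseteq> par (dil 2 R)"
      using inR R(1) unfolding parR par_def dil_def Rbl is_par_def by auto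
    moreover have "width (g (z, z')) \<ge> \<delta>" using hd unfolding geq width_def by simp
    moreover have "{z..z'} \<subseteq> par (g (z, z'))" unfolding parQ
      using cf(4) unfolding h_def[symmetric] c_def[symmetric] by auto
    moreover have "\<forall>x\<in>par (g (z, z')). \<bar>poly \<phi> x\<bar> \<le> (1 + 2 * L) * \<delta>"
    proof
      fix x assume x: "x \<in> par (g (z, z'))"
      have xI: "x \<in> {-1..1}" using x inR R(2) by auto
      have zI: "z \<in> {-1..1}" using zE R(2) unfolding E_def by auto
      have "(z \<le> x \<and> x \<le> z') \<or> \<bar>x - z\<bar> \<le> 2 * \<delta>"
        using cf(5) x unfolding parQ h_def[symmetric] c_def[symmetric] by auto
      thus "\<bar>poly \<phi> x\<bar> \<le> (1 + 2 * L) * \<delta>"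
      proof
        assume "z \<le> x \<and> x \<le> z'"
        hence "x \<in> E" using sub by auto
        thus ?thesis using L \<delta> unfolding E_def by (auto intro: order_trans[of _ \<delta>])
      next
        assume xz: "\<bar>x - z\<bar> \<le> 2 * \<delta>"
        have "\<bar>poly \<phi> x\<bar> \<le> \<bar>poly \<phi> z\<bar> + \<bar>poly \<phi> x - poly \<phi> z\<bar>" by linarith
        also have "\<dots> \<le> \<delta> + L * \<bar>x - z\<bar>"
          using zE lip xI zI unfolding E_def by (intro add_mono) auto
        also have "\<dots> \<le> \<delta> + L * (2 * \<delta>)" using L xz by (intro add_left_mono mult_left_mono) auto
        finally show ?thesis by (simp add: algebra_simps)
      qed
    qed
    ultimately show ?thesis by blast
  qed
  have covers: "E \<subseteq> (\<Union>Q\<in>S. par Q)"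
  proof
    fix x assume xE: "x \<in> E"
    have xr: "b - l \<le> x" "x \<le> b + l" using xE unfolding E_def parR by auto
    show "x \<in> (\<Union>Q\<in>S. par Q)"
    proof (cases "x \<in> Z")
      case True
      hence "(x, x) \<in> P" unfolding P_def using xE by auto
      thus ?thesis using Pfacts[of x x] unfolding S_def by force
    next
      case False
      define z where "z = Max {w \<in> Z. w \<le> x}"
      define z' where "z' = Min {w \<in> Z. x \<le> w}"
      have fz: "finite {w \<in> Z. w \<le> x}" "finite {w \<in> Z. x \<le> w}" using Zcard by auto
      have nez: "b - l \<in> {w \<in> Z. w \<le> x}" "b + l \<in> {w \<in> Z. x \<le> w}" using bZ xr by auto
      have zZ: "z \<in> Z" "z \<le> x" using Max_in[OF fz(1)] nez(1) unfolding z_def by auto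
      have z'Z: "z' \<in> Z" "x \<le> z'" using Min_in[OF fz(2)] nez(2) unfolding z'_def by auto
      have zmax: "w \<le> z" if "w \<in> Z" "w \<le> x" for w
        using Max_ge[OF fz(1)] that unfolding z_def by auto
      have zmin: "z' \<le> w" if "w \<in> Z" "x \<le> w" for w
        using Min_le[OF fz(2)] that unfolding z'_def by auto
      have zb: "b - l \<le> z" "z' \<le> b + l" using zmax[OF bZ(1) xr(1)] zmin[OF bZ(2) xr(2)] by auto
      have seg: "{z..z'} \<subseteq> E"
      proof
        fix y assume y: "y \<in> {z..z'}"
        have yR: "y \<in> par R" using y zb unfolding parR by auto
        show "y \<in> E"
        proof (rule ccontr)
          assume "y \<notin> E"
          hence big: "\<bar>poly \<phi> y\<bar> > \<delta>" using yR unfolding E_def by auto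
          have px: "\<bar>poly \<phi> x\<bar> \<le> \<delta>" using xE unfolding E_def by auto
          have ndeg: "degree \<phi> \<noteq> 0"
          proof
            assume "degree \<phi> = 0"
            then obtain a where "\<phi> = [:a:]" by (metis degree_eq_zeroE)
            thus False using big px by simp
          qed
          have "\<exists>t. \<bar>poly \<phi> t\<bar> = \<delta> \<and> min x y \<le> t \<and> t \<le> max x y"
          proof (cases "x \<le> y")
            case xy: True
            show ?thesis
            proof (cases "poly \<phi> y > \<delta>")
              case True
              obtain t where "x \<le> t" "t \<le> y" "poly \<phi> t = \<delta>"
                using IVT[of "poly \<phi>" x \<delta> y] True px xy by force
              thus ?thesis by (intro exI[of _ t]) (simp add: \<delta> less_imp_le)
            next
              case False
              hence "poly \<phi> y < - \<delta>" using big by auto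
              then obtain t where "x \<le> t" "t \<le> y" "poly \<phi> t = - \<delta>"
                using IVT2[of "poly \<phi>" y "- \<delta>" x] px xy by force
              thus ?thesis by (intro exI[of _ t]) (simp add: \<delta> less_imp_le)
            qed
          next
            case xy: False
            show ?thesis
            proof (cases "poly \<phi> y > \<delta>")
              case True
              obtain t where "y \<le> t" "t \<le> x" "poly \<phi> t = \<delta>"
                using IVT2[of "poly \<phi>" x \<delta> y] True px xy by force
              thus ?thesis by (intro exI[of _ t]) (simp add: \<delta> less_imp_le)
            next
              case False
              hence "poly \<phi> y < - \<delta>" using big by auto
              then obtain t where "y \<le> t" "t \<le> x" "poly \<phi> t = - \<delta>"
                using IVT[of "poly \<phi>" y "- \<delta>" x] px xy by force
              thus ?thesis by (intro exI[of _ t]) (simp add: \<delta> less_imp_le)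
            qed
          qed
          then obtain t where t: "\<bar>poly \<phi> t\<bar> = \<delta>" "min x y \<le> t" "t \<le> max x y" by blast
          have tZ: "t \<in> Z" using rootZ[OF ndeg t(1)] .
          have "t \<noteq> x" using tZ False by auto
          moreover have "t \<noteq> y" using t(1) big by auto
          ultimately show False
          proof -
            assume "t \<noteq> x" "t \<noteq> y"
            show False
            proof (cases "x \<le> y")
              case True
              hence "x < t" "t < y" using t \<open>t \<noteq> x\<close> \<open>t \<noteq> y\<close> by auto
              hence "z' \<le> t" using zmin[OF tZ] by auto
              thus False using \<open>t < y\<close> y by auto
            next
              case False
              hence "y < t" "t < x" using t \<open>t \<noteq> x\<close> \<open>t \<noteq> y\<close> by auto
              hence "t \<le> z" using zmax[OF tZ] by auto
              thus False using \<open>y < t\<close> y by auto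
            qed
          qed
        qed
      qed
      have "(z, z') \<in> P" unfolding P_def using zZ z'Z seg by auto
      moreover have "x \<in> {z..z'}" using zZ z'Z by auto
      ultimately show ?thesis using Pfacts[of z z'] unfolding S_def by force
    qed
  qed
  show ?thesis
  proof (intro exI[of _ S] conjI)
    show "finite S" unfolding S_def using finP by simp
    show "card S \<le> (2*d+2)^2" by (rule cardS)
    show "{x \<in> par R. \<bar>poly \<phi> x\<bar> \<le> \<delta>} \<subseteq> (\<Union>Q\<in>S. par Q)" using covers unfolding E_def .
    show "\<forall>Q\<in>S. is_par Q \<and> par Q \<subseteq> par (dil 2 R) \<and> width Q \<ge> \<delta>"
    proof
      fix Q assume "Q \<in> S"
      then obtain z z' where "(z, z') \<in> P" "Q = g (z, z')" unfolding S_def by auto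
      thus "is_par Q \<and> par Q \<subseteq> par (dil 2 R) \<and> width Q \<ge> \<delta>" using Pfacts by blast
    qed
    show "\<forall>Q\<in>S. \<forall>x\<in>par Q. \<bar>poly \<phi> x\<bar> \<le> (1 + 2 * L) * \<delta>"
    proof
      fix Q assume "Q \<in> S"
      then obtain z z' where "(z, z') \<in> P" "Q = g (z, z')" unfolding S_def by auto
      thus "\<forall>x\<in>par Q. \<bar>poly \<phi> x\<bar> \<le> (1 + 2 * L) * \<delta>" using Pfacts by blast
    qed
  qed
qed



lemma inv_exp_le: "p \<ge> 2 \<Longrightarrow> 0 \<le> inv_exp p \<and> inv_exp p \<le> 1/2"
proof (cases "p = \<infinity>")
  case False
  assume p: "p \<ge> 2"
  define r where "r = enn2real p"
  have pr: "p = ennreal r" using False unfolding r_def by (cases p) auto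
  have r2: "r \<ge> 2" using p pr by simp
  thus ?thesis using False unfolding inv_exp_def r_def[symmetric] by (simp add: field_simps)
qed (simp add: inv_exp_def)

lemma delta_pow: "0 < (\<delta>::real) \<Longrightarrow> \<delta> < 1 \<Longrightarrow> 0 < \<epsilon> \<Longrightarrow> \<delta> powr (- \<epsilon>) \<ge> 1"
  by (simp add: powr_minus one_le_inverse powr_le1 less_imp_le)

theorem proposition2p5:
  "\<forall>d::nat. d \<ge> 1 \<longrightarrow> (\<exists>c>0. \<forall>\<epsilon>::real. 0 < \<epsilon> \<and> \<epsilon> \<le> 1 \<longrightarrow>
     (\<exists>(C::real) (B::real \<Rightarrow> real) (Cp::ennreal \<Rightarrow> real). C > 0 \<and> overlap_fun B \<and>
       (\<forall>\<phi>\<in>P1 d. \<forall>\<delta>::real. 0 < \<delta> \<and> \<delta> < c \<longrightarrow>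
         (\<forall>R. is_par R \<and> par R \<subseteq> {-1..1} \<and> width R \<ge> \<delta> \<longrightarrow>
           (\<exists>S::(real \<times> real) set. finite S \<and>
              {x \<in> par R. \<bar>poly \<phi> x\<bar> \<le> \<delta>} \<subseteq> (\<Union>Q\<in>S. par Q) \<and>
              (\<forall>Q\<in>S. is_par Q \<and> par Q \<subseteq> par (dil 2 R) \<and> width Q \<ge> \<delta>) \<and>
              B_overlapping B S \<and>
              (\<forall>Q\<in>S. \<forall>x\<in>par Q. \<bar>poly \<phi> x\<bar> \<le> C * \<delta>) \<and>
              (\<forall>p::ennreal. p \<ge> 2 \<longrightarrow>
                 decouples {x \<in> par R. \<bar>poly \<phi> x\<bar> \<le> \<delta>} S p p (Cp p * \<delta> powr (- \<epsilon>))))))))"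
proof (intro allI impI)
  fix d :: nat assume d: "d \<ge> 1"
  obtain L where L: "L \<ge> 0" "\<forall>\<phi>\<in>P1 d. \<forall>x\<in>{-1..1}. \<forall>y\<in>{-1..1}. \<bar>poly \<phi> x - poly \<phi> y\<bar> \<le> L * \<bar>x - y\<bar>"
    using poly_lip[OF d] by blast
  define M :: real where "M = real ((2*d+2)^2)"
  have M1: "M \<ge> 1" unfolding M_def by simp
  show "\<exists>c>0. \<forall>\<epsilon>::real. 0 < \<epsilon> \<and> \<epsilon> \<le> 1 \<longrightarrow>
     (\<exists>(C::real) (B::real \<Rightarrow> real) (Cp::ennreal \<Rightarrow> real). C > 0 \<and> overlap_fun B \<and>
       (\<forall>\<phi>\<in>P1 d. \<forall>\<delta>::real. 0 < \<delta> \<and> \<delta> < c \<longrightarrow>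
         (\<forall>R. is_par R \<and> par R \<subseteq> {-1..1} \<and> width R \<ge> \<delta> \<longrightarrow>
           (\<exists>S::(real \<times> real) set. finite S \<and>
              {x \<in> par R. \<bar>poly \<phi> x\<bar> \<le> \<delta>} \<subseteq> (\<Union>Q\<in>S. par Q) \<and>
              (\<forall>Q\<in>S. is_par Q \<and> par Q \<subseteq> par (dil 2 R) \<and> width Q \<ge> \<delta>) \<and>
              B_overlapping B S \<and>
              (\<forall>Q\<in>S. \<forall>x\<in>par Q. \<bar>poly \<phi> x\<bar> \<le> C * \<delta>) \<and>
              (\<forall>p::ennreal. p \<ge> 2 \<longrightarrow>
                 decouples {x \<in> par R. \<bar>poly \<phi> x\<bar> \<le> \<delta>} S p p (Cp p * \<delta> powr (- \<epsilon>)))))))"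
  proof (rule exI[of _ "1::real"], intro conjI allI impI)
    fix \<epsilon> :: real assume \<epsilon>: "0 < \<epsilon> \<and> \<epsilon> \<le> 1"
    show "\<exists>(C::real) (B::real \<Rightarrow> real) (Cp::ennreal \<Rightarrow> real). C > 0 \<and> overlap_fun B \<and>
       (\<forall>\<phi>\<in>P1 d. \<forall>\<delta>::real. 0 < \<delta> \<and> \<delta> < 1 \<longrightarrow>
         (\<forall>R. is_par R \<and> par R \<subseteq> {-1..1} \<and> width R \<ge> \<delta> \<longrightarrow>
           (\<exists>S::(real \<times> real) set. finite S \<and>
              {x \<in> par R. \<bar>poly \<phi> x\<bar> \<le> \<delta>} \<subseteq> (\<Union>Q\<in>S. par Q) \<and>
              (\<forall>Q\<in>S. is_par Q \<and> par Q \<subseteq> par (dil 2 R) \<and> width Q \<ge> \<delta>) \<and>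
              B_overlapping B S \<and>
              (\<forall>Q\<in>S. \<forall>x\<in>par Q. \<bar>poly \<phi> x\<bar> \<le> C * \<delta>) \<and>
              (\<forall>p::ennreal. p \<ge> 2 \<longrightarrow>
                 decouples {x \<in> par R. \<bar>poly \<phi> x\<bar> \<le> \<delta>} S p p (Cp p * \<delta> powr (- \<epsilon>))))))"
    proof (intro exI[of _ "1 + 2 * L"] exI[of _ "\<lambda>_. M"] exI[of _ "\<lambda>_. M"] conjI ballI allI impI)
      show "0 < 1 + 2 * L" using L by simp
      show "overlap_fun (\<lambda>_. M)" unfolding overlap_fun_def using M1 by (simp add: mono_on_def)
      fix \<phi> \<delta> R assume \<phi>: "\<phi> \<in> P1 d" and \<delta>: "0 < \<delta> \<and> \<delta> < 1"
        and R: "is_par R \<and> par R \<subseteq> {-1..1} \<and> width R \<ge> \<delta>"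
      have deg: "degree \<phi> \<le> d" using \<phi> unfolding P1_def by auto
      obtain S where S: "finite S" "card S \<le> (2*d+2)^2"
        "{x \<in> par R. \<bar>poly \<phi> x\<bar> \<le> \<delta>} \<subseteq> (\<Union>Q\<in>S. par Q)"
        "\<forall>Q\<in>S. is_par Q \<and> par Q \<subseteq> par (dil 2 R) \<and> width Q \<ge> \<delta>"
        "\<forall>Q\<in>S. \<forall>x\<in>par Q. \<bar>poly \<phi> x\<bar> \<le> (1 + 2 * L) * \<delta>"
      proof -
        have lipphi: "\<forall>x\<in>{-1..1}. \<forall>y\<in>{-1..1}. \<bar>poly \<phi> x - poly \<phi> y\<bar> \<le> L * \<bar>x - y\<bar>"
          using L(2) \<phi> by blast
        show ?thesis using cover[OF d L(1) lipphi deg, of \<delta> R] \<delta> R that by blast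
      qed
      have NM: "real (card S) \<le> M" unfolding M_def using S(2) by (simp only: of_nat_le_iff)
      show "\<exists>S::(real \<times> real) set. finite S \<and>
              {x \<in> par R. \<bar>poly \<phi> x\<bar> \<le> \<delta>} \<subseteq> (\<Union>Q\<in>S. par Q) \<and>
              (\<forall>Q\<in>S. is_par Q \<and> par Q \<subseteq> par (dil 2 R) \<and> width Q \<ge> \<delta>) \<and>
              B_overlapping (\<lambda>_. M) S \<and>
              (\<forall>Q\<in>S. \<forall>x\<in>par Q. \<bar>poly \<phi> x\<bar> \<le> (1 + 2 * L) * \<delta>) \<and>
              (\<forall>p::ennreal. p \<ge> 2 \<longrightarrow>
                 decouples {x \<in> par R. \<bar>poly \<phi> x\<bar> \<le> \<delta>} S p p (M * \<delta> powr (- \<epsilon>)))"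
      proof (intro exI[of _ S] conjI allI impI)
        show "B_overlapping (\<lambda>_. M) S" unfolding B_overlapping_def
        proof (intro allI impI)
          fix \<mu> :: real and x :: real
          have "(\<Sum>Q\<in>S. indicator (par (dil \<mu> Q)) x) \<le> (\<Sum>Q\<in>S. (1::real))"
            by (intro sum_mono) (simp add: indicator_def)
          also have "\<dots> = real (card S)" by simp
          finally show "(\<Sum>Q\<in>S. indicator (par (dil \<mu> Q)) x) \<le> M" using NM by linarith
        qed
        fix p :: ennreal assume p: "p \<ge> 2"
        show "decouples {x \<in> par R. \<bar>poly \<phi> x\<bar> \<le> \<delta>} S p p (M * \<delta> powr (- \<epsilon>))"
          unfolding decouples_def
        proof (intro conjI allI impI S(1) S(3))
          fix f :: "real \<times> real \<Rightarrow> real \<Rightarrow> complex"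
          assume f: "\<forall>Q\<in>S. fourier_supp_in p (f Q) (par Q \<inter> {x \<in> par R. \<bar>poly \<phi> x\<bar> \<le> \<delta>})"
          have mem: "\<forall>Q\<in>S. memLp p (f Q)" using f unfolding fourier_supp_in_def by auto
          define lq where "lq = lqnorm p (\<lambda>Q. Lpnorm p (f Q)) S"
          have td: "Lpnorm p (\<lambda>x. \<Sum>Q\<in>S. f Q x) \<le> real (card S) * lq" "0 \<le> lq"
            using triv_dec[OF S(1) p mem] unfolding lq_def by auto
          have K: "M * \<delta> powr (- \<epsilon>) \<ge> M" using delta_pow[of \<delta> \<epsilon>] \<delta> \<epsilon> M1 by simp
          have "real (card S) \<le> M * \<delta> powr (- \<epsilon>) * real (card S) powr (1/2 - inv_exp p)"
          proof (cases "card S = 0")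
            case True thus ?thesis by simp
          next
            case False
            have "1 \<le> real (card S) powr (1/2 - inv_exp p)"
              using False inv_exp_le[OF p] by (intro ge_one_powr_ge_zero) auto
            moreover have "real (card S) \<le> M * \<delta> powr (- \<epsilon>)" using NM K by linarith
            ultimately show ?thesis using M1 K
              by (metis mult.right_neutral mult_left_mono order_trans dual_order.trans zero_le_one)
          qed
          hence "real (card S) * lq \<le> M * \<delta> powr (- \<epsilon>) * real (card S) powr (1/2 - inv_exp p) * lq"
            using td(2) by (intro mult_right_mono) auto
          thus "Lpnorm p (\<lambda>x. \<Sum>Q\<in>S. f Q x)
              \<le> M * \<delta> powr (- \<epsilon>) * real (card S) powr (1/2 - inv_exp p) * lqnorm p (\<lambda>Q. Lpnorm p (f Q)) S"
            using td(1) unfolding lq_def by linarith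
        qed
      qed (use S in auto)
    qed
  qed simp
qed


end
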